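(* Let $n \geq 2$. (1) If $a(n-1) <_4 a(n+1)$ and $a(n) \leq_4 a(n+2)$, then $S(n) = \frac{a(n)a(n+1)}{4}$. (2) If $a(n-1) >_4 a(n+1)$ and $a(n) \geq_4 a(n+2)$, then $S(n) = \frac{a(n)a(n+1)}{4} + \frac12$. (3) If $a(n-1) <_4 a(n+1)$ and $a(n) >_4 a(n+2)$, then $S(n) = \frac{a(n)(a(n+1)-1)}{4}$. (4) If $a(n-1) >_4 a(n+1)$ and $a(n) <_4 a(n+2)$, then $S(n) = \frac{(a(n)+1)a(n+1)}{4}$.
   Context: $(a(n))_{n\geq0}$ is the increasing sequence (indexed from $0$, so $a(0)=1,a(1)=2,a(2)=4,a(3)=7,\ldots$) of odious numbers, i.e. nonnegative integers whose sum of binary digits is odd, and $S(n) = \sum_{k=0}^n a(k)$. For integers $x, y$, let $\bar x, \bar y \in \{0,1,2,3\}$ be their residues modulo $4$; write $x <_4 y$ if $\bar x < \bar y$, $x \leq_4 y$ if $\bar x \leq \bar y$, and $x >_4 y$ (resp. $x \geq_4 y$) if $y <_4 x$ (resp. $y \leq_4 x$). *)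

theory Defs
  imports Complex_Main "HOL-Library.Infinite_Set"
begin

fun bin_digit_sum :: "nat \<Rightarrow> nat" where
  "bin_digit_sum n = (if n = 0 then 0 else n mod 2 + bin_digit_sum (n div 2))"

declare bin_digit_sum.simps[simp del]

definition odious :: "nat \<Rightarrow> bool" where
  "odious m \<longleftrightarrow> odd (bin_digit_sum m)"

text \<open>a n: the n-th odious number in increasing order, indexed from 0 (a 0 = 1).\<close>
definition a :: "nat \<Rightarrow> nat" where
  "a n = enumerate {m. odious m} n"

definition S :: "nat \<Rightarrow> nat" where
  "S n = (\<Sum>k\<le>n. a k)"

definition lt4 :: "nat \<Rightarrow> nat \<Rightarrow> bool" where
  "lt4 x y \<longleftrightarrow> x mod 4 < y mod 4"

definition le4 :: "nat \<Rightarrow> nat \<Rightarrow> bool" where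
  "le4 x y \<longleftrightarrow> x mod 4 \<le> y mod 4"

end

theory Submission
  imports Defs
begin

definition e :: "nat \<Rightarrow> nat" where
  "e k = (if odious (2*k) then 0 else 1)"

lemma bds: "bin_digit_sum n = n mod 2 + bin_digit_sum (n div 2)"
  by (cases "n = 0") (simp_all add: bin_digit_sum.simps[of n] bin_digit_sum.simps[of 0])

lemma bds2: "bin_digit_sum (2*q + r) = r + bin_digit_sum q" if "r < 2"
  using bds[of "2*q+r"] that by simp

lemma odious_iff: "odious x \<longleftrightarrow> x = 2*(x div 2) + e (x div 2)"
proof -
  obtain q r where x: "x = 2*q + r" "r < 2" by (metis mod_less_divisor div_mult_mod_eq mult.commute zero_less_numeral)
  have q: "x div 2 = q" using x by simp
  have o2: "odious (2*q) \<longleftrightarrow> odd (bin_digit_sum q)"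
    using bds2[of 0 q] by (simp add: odious_def)
  have ox: "odious x \<longleftrightarrow> odd (r + bin_digit_sum q)"
    using bds2[of r q] x by (simp add: odious_def)
  show ?thesis using x o2 ox unfolding q e_def
    by (cases "r = 0") auto
qed

definition f :: "nat \<Rightarrow> nat" where "f k = 2*k + e k"

lemma e01: "e k \<le> 1" by (simp add: e_def)

lemma f_odious: "odious (f k)"
  using odious_iff[of "f k"] e01[of k] by (simp add: f_def)

lemma f_less: "q < r \<Longrightarrow> f q < f r"
  using e01[of q] e01[of r] by (simp add: f_def)

lemma f_less_iff: "f q < f r \<longleftrightarrow> q < r"
  by (metis f_less less_asym linorder_neqE_nat)

lemma inf_odious: "infinite {m. odious m}"
proof -
  have "range f \<subseteq> {m. odious m}" using f_odious by auto
  moreover have "inj f" by (rule injI) (metis f_less less_irrefl linorder_neqE_nat)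
  ultimately show ?thesis using finite_imageD infinite_UNIV_nat finite_subset by blast
qed

lemma a_f: "a k = f k"
proof (induction k)
  case 0
  have "(LEAST n. odious n) = 1"
  proof (rule Least_equality)
    have b0: "bin_digit_sum 0 = 0" by (simp add: bin_digit_sum.simps)
    show "odious 1" using bds2[of 1 0] b0 by (simp add: odious_def)
    fix y assume "odious y" then show "1 \<le> y"
      by (cases y) (auto simp: odious_def bin_digit_sum.simps[of 0])
  qed
  moreover have "f 0 = 1"
    by (simp add: f_def e_def odious_def bin_digit_sum.simps[of 0])
  ultimately show ?case by (simp add: a_def enumerate_0)
next
  case (Suc k)
  have "a (Suc k) = (LEAST s. s \<in> {m. odious m} \<and> a k < s)"
    unfolding a_def by (rule enumerate_Suc''[OF inf_odious])
  also have "\<dots> = f (Suc k)"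
  proof (rule Least_equality)
    show "f (Suc k) \<in> {m. odious m} \<and> a k < f (Suc k)"
      using f_odious Suc f_less[of k "Suc k"] by auto
    fix y assume y: "y \<in> {m. odious m} \<and> a k < y"
    then have oy: "y = f (y div 2)" using odious_iff unfolding f_def by auto
    show "f (Suc k) \<le> y"
    proof (rule ccontr)
      assume "\<not> ?thesis"
      then have "f (y div 2) < f (Suc k)" "f k < f (y div 2)" using oy y Suc by auto
      then show False unfolding f_less_iff by simp
    qed
  qed
  finally show ?case .
qed

lemma e_pair: "e (2*m) + e (2*m+1) = 1"
proof -
  have "odious (2*(2*m)) \<longleftrightarrow> odd (bin_digit_sum m)"
    using bds2[of 0 "2*m"] bds2[of 0 m] by (simp add: odious_def)
  moreover have "odious (2*(2*m+1)) \<longleftrightarrow> odd (1 + bin_digit_sum m)"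
    using bds2[of 0 "2*m+1"] bds2[of 1 m] by (simp add: odious_def)
  ultimately show ?thesis by (simp add: e_def)
qed

lemma e_pair2: "e (2*m+2) + e (2*m+3) = 1"
proof -
  have "2*(m+1) = 2*m+2" "2*(m+1)+1 = 2*m+3" by simp_all
  then show ?thesis using e_pair[of "m+1"] by metis
qed

lemma S_odd: "S (2*m+1) = (2*m+1)*(2*m+2) + m + 1"
proof (induction m)
  case 0
  have "S (2*0+1) = a 0 + a 1" by (simp add: S_def)
  then show ?case using e_pair[of 0] by (simp add: a_f f_def)
next
  case (Suc m)
  have eq: "2*Suc m+1 = Suc (Suc (2*m+1))" by simp
  have "S (2*Suc m+1) = S (2*m+1) + a (Suc (2*m+1)) + a (Suc (Suc (2*m+1)))"
    unfolding eq S_def by simp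
  also have "\<dots> = S (2*m+1) + a (2*m+2) + a (2*m+3)"
  proof -
    have "Suc (2*m+1) = 2*m+2" "Suc (Suc (2*m+1)) = 2*m+3" by simp_all
    then show ?thesis by (simp only:)
  qed
  also have "\<dots> = (2*Suc m+1)*(2*Suc m+2) + Suc m + 1"
    using Suc e_pair2[of m] unfolding a_f f_def by (simp add: algebra_simps)
  finally show ?case .
qed

lemma S_even: "S (2*m+2) = (2*m+1)*(2*m+2) + m + 1 + 4*m+4 + e (2*m+2)"
proof -
  have eq: "2*m+2 = Suc (2*m+1)" by simp
  have "S (2*m+2) = S (2*m+1) + a (2*m+2)" unfolding S_def eq sum.atMost_Suc ..
  then show ?thesis using S_odd[of m] unfolding a_f f_def by simp
qed

lemma m4s[simp]: "Suc (4*m) mod 4 = 1" "Suc (Suc (4*m)) mod 4 = 2"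
  "Suc (Suc (Suc (4*m))) mod 4 = 3" "(4*m + c) mod 4 = c mod (4::nat)" by presburger+

lemma af: "a k = 2*k + e k" by (simp add: a_f f_def)

theorem theorem3:
  fixes n :: nat
  assumes "n \<ge> 2"
  shows "(lt4 (a (n - 1)) (a (n + 1)) \<and> le4 (a n) (a (n + 2)) \<longrightarrow>
            real (S n) = real (a n) * real (a (n + 1)) / 4)
       \<and> (lt4 (a (n + 1)) (a (n - 1)) \<and> le4 (a (n + 2)) (a n) \<longrightarrow>
            real (S n) = real (a n) * real (a (n + 1)) / 4 + 1 / 2)
       \<and> (lt4 (a (n - 1)) (a (n + 1)) \<and> lt4 (a (n + 2)) (a n) \<longrightarrow>
            real (S n) = real (a n) * (real (a (n + 1)) - 1) / 4)
       \<and> (lt4 (a (n + 1)) (a (n - 1)) \<and> lt4 (a n) (a (n + 2)) \<longrightarrow>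
            real (S n) = (real (a n) + 1) * real (a (n + 1)) / 4)"
proof (cases "even n")
  case False
  then obtain m where n: "n = 2*m+1" by (metis oddE)
  have p1: "e (2*m) + e (2*m+1) = 1" by (rule e_pair)
  have p2: "e (2*m+2) + e (2*m+3) = 1" by (rule e_pair2)
  have k: "n-1 = 2*m" "n = 2*m+1" "n+1 = 2*m+2" "n+2 = 2*m+3" using n by simp_all
  have A: "a (n-1) = 4*m + e (2*m)" "a n = 4*m+2 + e (2*m+1)" "a (n+1) = 4*m+4+e(2*m+2)"
     "a (n+2) = 4*m+6+e(2*m+3)"
    subgoal unfolding k(1) af add_mult_distrib2 mult.assoc by simp
    subgoal unfolding k(2) af add_mult_distrib2 mult.assoc by simp
    subgoal unfolding k(3) af add_mult_distrib2 mult.assoc by simp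
    subgoal unfolding k(4) af add_mult_distrib2 mult.assoc by simp
    done
  have Sn: "S n = (2*m+1)*(2*m+2) + m + 1" using n S_odd by simp
  show ?thesis
  proof (cases "e (2*m) = 0")
    case True
    then have e1: "e (2*m+1) = 1" using p1 by simp
    show ?thesis
    proof (cases "e (2*m+2) = 0")
      case True
      then have "e (2*m+3) = 1" using p2 by simp
      then have v: "a (n-1) = 4*m" "a n = 4*m+3" "a (n+1) = 4*m+4" "a (n+2) = 4*m+7"
        using A True \<open>e (2*m) = 0\<close> e1 by simp_all
      show ?thesis unfolding lt4_def le4_def v by simp
    next
      case False
      then have "e (2*m+2) = 1" "e (2*m+3) = 0" using p2 e01[of "2*m+2"] by simp_all
      then have v: "a (n-1) = 4*m" "a n = 4*m+3" "a (n+1) = 4*m+5" "a (n+2) = 4*m+6"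
        using A \<open>e (2*m) = 0\<close> e1 by simp_all
      have "real (S n) = real (a n) * (real (a (n + 1)) - 1) / 4"
        unfolding v Sn by (simp add: field_simps; simp add: algebra_simps)
      then show ?thesis unfolding lt4_def le4_def v by simp
    qed
  next
    case False
    then have e0: "e (2*m) = 1" "e (2*m+1) = 0" using p1 e01[of "2*m"] by simp_all
    show ?thesis
    proof (cases "e (2*m+2) = 0")
      case True
      then have "e (2*m+3) = 1" using p2 by simp
      then have v: "a (n-1) = 4*m+1" "a n = 4*m+2" "a (n+1) = 4*m+4" "a (n+2) = 4*m+7"
        using A True e0 by simp_all
      have "real (S n) = (real (a n) + 1) * real (a (n + 1)) / 4"
        unfolding v Sn by (simp add: field_simps; simp add: algebra_simps)
      then show ?thesis unfolding lt4_def le4_def v by simp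
    next
      case False
      then have "e (2*m+2) = 1" "e (2*m+3) = 0" using p2 e01[of "2*m+2"] by simp_all
      then have v: "a (n-1) = 4*m+1" "a n = 4*m+2" "a (n+1) = 4*m+5" "a (n+2) = 4*m+6"
        using A e0 by simp_all
      show ?thesis unfolding lt4_def le4_def v by simp
    qed
  qed
next
  case True
  then obtain m where n: "n = 2*m+2" using assms
    by (metis evenE add_2_eq_Suc' le_add_diff_inverse mult_2 add.commute dvd_diff_nat dvd_refl nat_mult_eq_cancel_disj)
  have p1: "e (2*m) + e (2*m+1) = 1" by (rule e_pair)
  have p2: "e (2*m+2) + e (2*m+3) = 1" by (rule e_pair2)
  have k: "n-1 = 2*m+1" "n = 2*m+2" "n+1 = 2*m+3" "n+2 = 2*m+4" using n by simp_all
  have A: "a (n-1) = 4*m+2 + e (2*m+1)" "a n = 4*m+4 + e (2*m+2)" "a (n+1) = 4*m+6+e(2*m+3)"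
     "a (n+2) = 4*m+8+e(2*m+4)"
    subgoal unfolding k(1) af add_mult_distrib2 mult.assoc by simp
    subgoal unfolding k(2) af add_mult_distrib2 mult.assoc by simp
    subgoal unfolding k(3) af add_mult_distrib2 mult.assoc by simp
    subgoal unfolding k(4) af add_mult_distrib2 mult.assoc by simp
    done
  have Sn: "S n = (2*m+1)*(2*m+2) + m + 1 + 4*m+4 + e (2*m+2)" using n S_even by simp
  have e4: "e (2*m+4) \<le> 1" by (rule e01)
  have m4: "a (n+2) mod 4 = e (2*m+4)" using A(4) e4 by presburger
  have m4': "a (n+2) mod 4 \<le> 1" using m4 e4 by simp
  show ?thesis
  proof (cases "e (2*m+1) = 0")
    case True
    show ?thesis
    proof (cases "e (2*m+2) = 0")
      case True
      then have "e (2*m+3) = 1" using p2 by simp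
      then have v: "a (n-1) = 4*m+2" "a n = 4*m+4" "a (n+1) = 4*m+7"
        using A True \<open>e (2*m+1) = 0\<close> by simp_all
      have "real (S n) = real (a n) * real (a (n + 1)) / 4"
        unfolding v Sn True by (simp add: field_simps; simp add: algebra_simps)
      then show ?thesis using m4' unfolding lt4_def le4_def v by simp
    next
      case False
      then have "e (2*m+2) = 1" "e (2*m+3) = 0" using p2 e01[of "2*m+2"] by simp_all
      then have v: "a (n-1) = 4*m+2" "a n = 4*m+5" "a (n+1) = 4*m+6"
        using A \<open>e (2*m+1) = 0\<close> by simp_all
      show ?thesis unfolding lt4_def le4_def v by simp
    qed
  next
    case False
    then have e0: "e (2*m+1) = 1" using e01[of "2*m+1"] by simp
    show ?thesis
    proof (cases "e (2*m+2) = 0")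
      case True
      then have "e (2*m+3) = 1" using p2 by simp
      then have v: "a (n-1) = 4*m+3" "a n = 4*m+4" "a (n+1) = 4*m+7"
        using A True e0 by simp_all
      show ?thesis unfolding lt4_def le4_def v by simp
    next
      case False
      then have e2: "e (2*m+2) = 1" "e (2*m+3) = 0" using p2 e01[of "2*m+2"] by simp_all
      then have v: "a (n-1) = 4*m+3" "a n = 4*m+5" "a (n+1) = 4*m+6"
        using A e0 by simp_all
      have "real (S n) = real (a n) * real (a (n + 1)) / 4 + 1/2"
        unfolding v Sn e2 by (simp add: field_simps; simp add: algebra_simps)
      then show ?thesis using m4' unfolding lt4_def le4_def v by simp
    qed
  qed
qed

end
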